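(* Every IC and IR mechanism that is not floor-randomized is dominated by a floor-randomized mechanism.
   Context: Setting. Let $\Theta=[\underline\theta,\overline\theta]$ with $0<\underline\theta<\overline\theta$. Let $c>0$ and let $P:\mathbb R_+\to\mathbb R_+$ be continuous and strictly decreasing with $P(\overline q)=0$ for some $\overline q>0$. Put $V(q)=\int_0^q P(z)\,dz$ and $\mathrm{TS}(\theta,q)=V(q)-c-\theta q$ for $q>0$, $\mathrm{TS}(\theta,0)=0$. Assume (A2): $\mathrm{TS}(\overline\theta,P^{-1}(\overline\theta))>0$. A mechanism is a triple $M=(r,q,u)$ of functions $r:\Theta\to[0,1]$, $q:\Theta\to[0,\overline q]$, $u:\Theta\to\mathbb R$ with $q(\theta)=0$ if and only if $r(\theta)=0$. It is IC if $u(\theta)\ge u(\theta')+(\theta'-\theta)q(\theta')r(\theta')$ for all $\theta,\theta'\in\Theta$, and IR if $u(\theta)\ge 0$ for all $\theta$. (Known fact: $M$ is IC iff $\theta\mapsto q(\theta)r(\theta)$ is nonincreasing and $u(\theta)=u(\overline\theta)+\int_\theta^{\overline\theta}q(z)r(z)\,dz$ for all $\theta$; an IC mechanism is IR iff $u(\overline\theta)\ge0$.) Fix $\alpha\in[0,1)$. The regulator's surplus at $\theta$ is $\mathrm{RS}_\alpha(\theta,M)=r(\theta)\,\mathrm{TS}(\theta,q(\theta))-(1-\alpha)u(\theta)$. An IC and IR mechanism $\tilde M$ dominates an IC and IR mechanism $M$ if $\mathrm{RS}_\alpha(\theta,\tilde M)\ge \mathrm{RS}_\alpha(\theta,M)$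 for all $\theta\in\Theta$ with strict inequality for some $\theta$; $M$ is undominated if it is IC, IR and not dominated by any IC and IR mechanism. The quantity floor $\hat q$ is the unique $q>0$ with $V(q)-qP(q)=c$. A mechanism $(r,q,u)$ is floor-randomized if it is IC, IR, $u(\overline\theta)=0$, and $\Theta$ can be partitioned into three pairwise disjoint (possibly empty) intervals $\Theta_1,\Theta_{01},\Theta_0$, with every element of $\Theta_0$ larger than every element of $\Theta_{01}$ and every element of $\Theta_{01}$ larger than every element of $\Theta_1$, such that: $q(\theta)\ge\hat q$ and $r(\theta)=1$ for $\theta\in\Theta_1$; $q(\theta)=\hat q$ and $r(\theta)\in(0,1)$ for $\theta\in\Theta_{01}$; $q(\theta)=r(\theta)=0$ for $\theta\in\Theta_0$. *)

theory Defs
  imports "HOL-Analysis.Analysis"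
begin

text \<open>A mechanism is a triple (r, q, u) of real functions; only their values on
  the type space Theta = {tlo..thi} matter.\<close>
type_synonym mech = "(real \<Rightarrow> real) \<times> (real \<Rightarrow> real) \<times> (real \<Rightarrow> real)"

definition V :: "(real \<Rightarrow> real) \<Rightarrow> real \<Rightarrow> real" where
  "V P q = integral {0..q} P"

definition TS :: "(real \<Rightarrow> real) \<Rightarrow> real \<Rightarrow> real \<Rightarrow> real \<Rightarrow> real" where
  "TS P c \<theta> q = (if q = 0 then 0 else V P q - c - \<theta> * q)"

definition is_mechanism :: "real \<Rightarrow> real \<Rightarrow> real \<Rightarrow> mech \<Rightarrow> bool" where
  "is_mechanism tlo thi qbar M = (case M of (r, q, u) \<Rightarrow>
     (\<forall>\<theta>\<in>{tlo..thi}. 0 \<le> r \<theta> \<and> r \<theta> \<le> 1 \<and> 0 \<le> q \<theta> \<and> q \<theta> \<le> qbar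
        \<and> (q \<theta> = 0 \<longleftrightarrow> r \<theta> = 0)))"

definition IC :: "real \<Rightarrow> real \<Rightarrow> mech \<Rightarrow> bool" where
  "IC tlo thi M = (case M of (r, q, u) \<Rightarrow>
     (\<forall>\<theta>\<in>{tlo..thi}. \<forall>\<theta>'\<in>{tlo..thi}. u \<theta> \<ge> u \<theta>' + (\<theta>' - \<theta>) * q \<theta>' * r \<theta>'))"

definition IR :: "real \<Rightarrow> real \<Rightarrow> mech \<Rightarrow> bool" where
  "IR tlo thi M = (case M of (r, q, u) \<Rightarrow> (\<forall>\<theta>\<in>{tlo..thi}. u \<theta> \<ge> 0))"

definition IC_IR :: "real \<Rightarrow> real \<Rightarrow> real \<Rightarrow> mech \<Rightarrow> bool" where
  "IC_IR tlo thi qbar M = (is_mechanism tlo thi qbar M \<and> IC tlo thi M \<and> IR tlo thi M)"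

definition RS :: "(real \<Rightarrow> real) \<Rightarrow> real \<Rightarrow> real \<Rightarrow> real \<Rightarrow> mech \<Rightarrow> real" where
  "RS P c \<alpha> \<theta> M = (case M of (r, q, u) \<Rightarrow> r \<theta> * TS P c \<theta> (q \<theta>) - (1 - \<alpha>) * u \<theta>)"

definition dominates :: "(real \<Rightarrow> real) \<Rightarrow> real \<Rightarrow> real \<Rightarrow> real \<Rightarrow> real \<Rightarrow> real \<Rightarrow> mech \<Rightarrow> mech \<Rightarrow> bool" where
  "dominates P c \<alpha> tlo thi qbar M' M =
     (IC_IR tlo thi qbar M' \<and> IC_IR tlo thi qbar M \<and>
      (\<forall>\<theta>\<in>{tlo..thi}. RS P c \<alpha> \<theta> M' \<ge> RS P c \<alpha> \<theta> M) \<and>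
      (\<exists>\<theta>\<in>{tlo..thi}. RS P c \<alpha> \<theta> M' > RS P c \<alpha> \<theta> M))"

definition qfloor :: "(real \<Rightarrow> real) \<Rightarrow> real \<Rightarrow> real" where
  "qfloor P c = (THE q. q > 0 \<and> V P q - q * P q = c)"

definition floor_randomized :: "(real \<Rightarrow> real) \<Rightarrow> real \<Rightarrow> real \<Rightarrow> real \<Rightarrow> real \<Rightarrow> mech \<Rightarrow> bool" where
  "floor_randomized P c tlo thi qbar M = (case M of (r, q, u) \<Rightarrow>
     IC_IR tlo thi qbar M \<and> u thi = 0 \<and>
     (\<exists>T1 T01 T0. is_interval T1 \<and> is_interval T01 \<and> is_interval T0 \<and>
        T1 \<inter> T01 = {} \<and> T1 \<inter> T0 = {} \<and> T01 \<inter> T0 = {} \<and>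
        T1 \<union> T01 \<union> T0 = {tlo..thi} \<and>
        (\<forall>x\<in>T0. \<forall>y\<in>T01. y < x) \<and> (\<forall>x\<in>T01. \<forall>y\<in>T1. y < x) \<and>
        (\<forall>x\<in>T0. \<forall>y\<in>T1. y < x) \<and>
        (\<forall>\<theta>\<in>T1. q \<theta> \<ge> qfloor P c \<and> r \<theta> = 1) \<and>
        (\<forall>\<theta>\<in>T01. q \<theta> = qfloor P c \<and> 0 < r \<theta> \<and> r \<theta> < 1) \<and>
        (\<forall>\<theta>\<in>T0. q \<theta> = 0 \<and> r \<theta> = 0)))"

end

theory Submission
  imports Defs
begin

lemma Vdiff:
  assumes cont: "continuous_on {0..} P" and "0 \<le> a" "a \<le> b"
  shows "V P b - V P a = integral {a..b} P"
proof -
  have "P integrable_on {0..b}"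
    by (rule integrable_continuous_interval, rule continuous_on_subset[OF cont]) auto
  from Henstock_Kurzweil_Integration.integral_combine[OF assms(2,3) this] show ?thesis unfolding V_def by simp
qed

lemma Vstrict:
  assumes cont: "continuous_on {0..} P" and dec: "\<forall>x y. 0 \<le> x \<longrightarrow> x < y \<longrightarrow> P y < P x"
    and "0 \<le> a" "a < b"
  shows "(b-a)*P b < V P b - V P a \<and> V P b - V P a < (b-a)*P a"
proof -
  have c: "continuous_on {a..b} P" by (rule continuous_on_subset[OF cont]) (use assms in auto)
  have ne: "{a<..<b} \<noteq> {}" using assms by auto
  have 1: "integral {a..b} (\<lambda>_. P b) < integral {a..b} P"
    by (rule integral_less_real[OF continuous_on_const c ne]) (use dec assms in auto)
  have 2: "integral {a..b} P < integral {a..b} (\<lambda>_. P a)"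
    by (rule integral_less_real[OF c continuous_on_const ne]) (use dec assms in auto)
  show ?thesis using 1 2 Vdiff[OF cont assms(3)] assms by (simp add: mult.commute)
qed

lemma V0: "V P 0 = 0" unfolding V_def by simp

lemma h_mono:
  assumes cont: "continuous_on {0..} P" and dec: "\<forall>x y. 0 \<le> x \<longrightarrow> x < y \<longrightarrow> P y < P x"
    and "0 \<le> a" "a < b"
  shows "V P a - a*P a < V P b - b * P b"
proof -
  have "(b-a)*P b < V P b - V P a" using Vstrict[OF cont dec assms(3,4)] by simp
  moreover have "a * P b \<le> a * P a"
  proof -
    have "P b < P a" using dec assms by auto
    then show ?thesis using assms(3) by (intro mult_left_mono) auto
  qed
  ultimately show ?thesis by (simp add: algebra_simps)
qed

lemma Vcont:
  assumes cont: "continuous_on {0..} P"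
  shows "continuous_on {0..b} (V P)"
proof -
  have "P integrable_on {0..b}"
    by (rule integrable_continuous_interval, rule continuous_on_subset[OF cont]) auto
  from indefinite_integral_continuous_1[OF this] show ?thesis unfolding V_def by simp
qed

lemma qfloor_props:
  assumes cont: "continuous_on {0..} P" and dec: "\<forall>x y. 0 \<le> x \<longrightarrow> x < y \<longrightarrow> P y < P x"
    and c: "c > 0" and q0: "q0 \<ge> 0" "V P q0 - q0 * P q0 > c"
  shows "qfloor P c > 0 \<and> V P (qfloor P c) - qfloor P c * P (qfloor P c) = c \<and> qfloor P c < q0"
proof -
  have hc: "continuous_on {0..q0} (\<lambda>q. V P q - q * P q)"
    by (intro continuous_intros Vcont[OF cont] continuous_on_subset[OF cont]) auto
  have f0: "V P 0 - 0 * P 0 \<le> c" using c by (simp add: V0)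
  have f1: "c \<le> V P q0 - q0 * P q0" using q0 by simp
  obtain x where x: "0 \<le> x" "x \<le> q0" "V P x - x * P x = c"
    using IVT'[of "\<lambda>q. V P q - q * P q" 0 c q0, OF f0 f1 q0(1) hc] by blast
  have x0: "x > 0"
  proof (rule ccontr)
    assume "\<not> x > 0" then have "x = 0" using x by simp
    then show False using x(3) c by (simp add: V0)
  qed
  have uniq: "y = x" if y: "y > 0" "V P y - y * P y = c" for y
  proof (rule ccontr)
    assume "y \<noteq> x"
    then consider "y < x" | "x < y" by linarith
    then show False
    proof cases
      case 1
      have "V P y - y*P y < V P x - x * P x" by (rule h_mono[OF cont dec _ 1]) (use y in simp)
      then show False using x(3) y(2) by simp
    next
      case 2
      have "V P x - x*P x < V P y - y * P y" by (rule h_mono[OF cont dec x(1) 2])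
      then show False using x(3) y(2) by simp
    qed
  qed
  have "qfloor P c = x" unfolding qfloor_def
  proof (rule the_equality)
    show "x > 0 \<and> V P x - x * P x = c" using x x0 by simp
    show "y = x" if "y > 0 \<and> V P y - y * P y = c" for y using uniq that by blast
  qed
  moreover have "x < q0"
  proof -
    have "x \<noteq> q0" using x(3) q0(2) by auto
    then show ?thesis using x(2) by simp
  qed
  ultimately show ?thesis using x x0 by auto
qed

lemma g_dec:
  assumes cont: "continuous_on {0..} P" and dec: "\<forall>x y. 0 \<le> x \<longrightarrow> x < y \<longrightarrow> P y < P x"
    and hq1: "V P q1 - q1 * P q1 \<ge> c" and q1: "0 < q1" "q1 < q2"
  shows "(V P q2 - c)/q2 < (V P q1 - c)/q1"
proof -
  have "V P q2 - V P q1 < (q2-q1)*P q1" using Vstrict[OF cont dec, of q1 q2] q1 by simp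
  then have "q1 * (V P q2 - V P q1) < q1 * ((q2-q1)*P q1)" using q1 by simp
  then have "q2 * (V P q1 - c) - q1 * (V P q2 - c) > (q2 - q1) * (V P q1 - q1 * P q1 - c)"
    by (simp add: algebra_simps)
  moreover have "(q2 - q1) * (V P q1 - q1 * P q1 - c) \<ge> 0" using hq1 q1 by simp
  ultimately have "q2 * (V P q1 - c) - q1 * (V P q2 - c) > 0" by linarith
  with q1 show ?thesis by (simp add: field_simps)
qed

lemma g_max:
  assumes cont: "continuous_on {0..} P" and dec: "\<forall>x y. 0 \<le> x \<longrightarrow> x < y \<longrightarrow> P y < P x"
    and hf: "V P f - f * P f = c" and q: "0 < q" "q < f"
  shows "(V P q - c)/q < (V P f - c)/f"
proof -
  have "V P f - V P q > (f-q)*P f" using Vstrict[OF cont dec, of q f] q by simp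
  then have "f * (V P f - V P q) > f * ((f-q)*P f)" using q by simp
  then have "q * (V P f - c) - f * (V P q - c) > (f - q) * (c - V P f + f * P f)"
    by (simp add: algebra_simps)
  moreover have "c - V P f + f * P f = 0" using hf by simp
  ultimately have "q * (V P f - c) - f * (V P q - c) > 0" by simp
  with q show ?thesis by (simp add: field_simps)
qed


lemma h_ge:
  assumes cont: "continuous_on {0..} P" and dec: "\<forall>x y. 0 \<le> x \<longrightarrow> x < y \<longrightarrow> P y < P x"
    and hf: "V P f - f * P f = c" and f: "0 < f" "f \<le> q"
  shows "c \<le> V P q - q * P q"
proof (cases "f = q")
  case True then show ?thesis using hf by simp
next
  case False
  then have "f < q" using f by simp
  from h_mono[OF cont dec _ this] f hf show ?thesis by simp
qed

lemma Gcomp: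
  assumes cont: "continuous_on {0..} P" and dec: "\<forall>x y. 0 \<le> x \<longrightarrow> x < y \<longrightarrow> P y < P x"
    and hf: "V P f - f * P f = c" and f: "0 < f" and X: "0 < X" "X \<le> q"
    and q': "q' = (if f \<le> X then X else f)"
  shows "q = q' \<or> (V P q - c)/q < (V P q' - c)/q'"
proof -
  consider "q = q'" | "q' < q" | "q < q'" by linarith
  then show ?thesis
  proof cases
    case 1 then show ?thesis by simp
  next
    case 2
    have "f \<le> q'" using q' by auto
    then have hq': "c \<le> V P q' - q' * P q'" by (rule h_ge[OF cont dec hf f])
    have "q' > 0" using q' f X by auto
    from g_dec[OF cont dec hq' this 2] show ?thesis by simp
  next
    case 3
    then have "q' = f" using q' X by (auto split: if_splits)
    with g_max[OF cont dec hf, of q] 3 X show ?thesis by simp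
  qed
qed

lemma rTS:
  assumes "q > 0"
  shows "r * TS P c t q = (q*r) * ((V P q - c)/q) - t*(q*r)"
  using assms unfolding TS_def by (simp add: field_simps)

lemma fr_intro:
  fixes x :: "real \<Rightarrow> real"
  assumes icir: "IC_IR tlo thi qbar (r,q,u)" and u0: "u thi = 0" and f: "f = qfloor P c" "f > 0"
    and mono: "\<forall>a\<in>{tlo..thi}. \<forall>b\<in>{tlo..thi}. a \<le> b \<longrightarrow> x b \<le> x a"
    and nn: "\<forall>t\<in>{tlo..thi}. 0 \<le> x t"
    and h1: "\<forall>t\<in>{tlo..thi}. f \<le> x t \<longrightarrow> q t \<ge> f \<and> r t = 1"
    and h01: "\<forall>t\<in>{tlo..thi}. 0 < x t \<and> x t < f \<longrightarrow> q t = f \<and> 0 < r t \<and> r t < 1"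
    and h0: "\<forall>t\<in>{tlo..thi}. x t = 0 \<longrightarrow> q t = 0 \<and> r t = 0"
  shows "floor_randomized P c tlo thi qbar (r,q,u)"
proof -
  define T1 where "T1 = {t\<in>{tlo..thi}. f \<le> x t}"
  define T01 where "T01 = {t\<in>{tlo..thi}. 0 < x t \<and> x t < f}"
  define T0 where "T0 = {t\<in>{tlo..thi}. x t = 0}"
  have i1: "is_interval T1" unfolding is_interval_1 T1_def
  proof (intro ballI allI impI)
    fix a b y assume a: "a \<in> {t \<in> {tlo..thi}. f \<le> x t}" and b: "b \<in> {t \<in> {tlo..thi}. f \<le> x t}"
      and y: "a \<le> y \<and> y \<le> b"
    then have "x b \<le> x y" using mono by auto
    then show "y \<in> {t \<in> {tlo..thi}. f \<le> x t}" using a b y by auto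
  qed
  have i01: "is_interval T01" unfolding is_interval_1 T01_def
  proof (intro ballI allI impI)
    fix a b y assume a: "a \<in> {t \<in> {tlo..thi}. 0 < x t \<and> x t < f}" and b: "b \<in> {t \<in> {tlo..thi}. 0 < x t \<and> x t < f}"
      and y: "a \<le> y \<and> y \<le> b"
    then have "x b \<le> x y" "x y \<le> x a" using mono by auto
    then show "y \<in> {t \<in> {tlo..thi}. 0 < x t \<and> x t < f}" using a b y by auto
  qed
  have i0: "is_interval T0" unfolding is_interval_1 T0_def
  proof (intro ballI allI impI)
    fix a b y assume a: "a \<in> {t \<in> {tlo..thi}. x t = 0}" and b: "b \<in> {t \<in> {tlo..thi}. x t = 0}"
      and y: "a \<le> y \<and> y \<le> b"
    have yi: "y \<in> {tlo..thi}" using a b y by auto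
    have "x y \<le> x a" using mono[rule_format, of a y] a yi y by auto
    moreover have "0 \<le> x y" using nn yi by auto
    ultimately show "y \<in> {t \<in> {tlo..thi}. x t = 0}" using a yi by auto
  qed
  have o1: "\<forall>a\<in>T0. \<forall>b\<in>T01. b < a"
  proof (intro ballI)
    fix a b assume a: "a \<in> T0" and b: "b \<in> T01"
    show "b < a"
    proof (rule ccontr)
      assume "\<not> b < a" then have "x b \<le> x a" using mono[rule_format, of a b] a b unfolding T0_def T01_def by auto
      then show False using a b unfolding T0_def T01_def by auto
    qed
  qed
  have o2: "\<forall>a\<in>T01. \<forall>b\<in>T1. b < a"
  proof (intro ballI)
    fix a b assume a: "a \<in> T01" and b: "b \<in> T1"
    show "b < a"
    proof (rule ccontr)
      assume "\<not> b < a" then have "x b \<le> x a" using mono[rule_format, of a b] a b unfolding T1_def T01_def by auto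
      then show False using a b unfolding T1_def T01_def by auto
    qed
  qed
  have o3: "\<forall>a\<in>T0. \<forall>b\<in>T1. b < a"
  proof (intro ballI)
    fix a b assume a: "a \<in> T0" and b: "b \<in> T1"
    show "b < a"
    proof (rule ccontr)
      assume "\<not> b < a" then have "x b \<le> x a" using mono[rule_format, of a b] a b unfolding T1_def T0_def by auto
      then show False using a b f(2) unfolding T1_def T0_def by auto
    qed
  qed
  have un: "T1 \<union> T01 \<union> T0 = {tlo..thi}" using nn unfolding T1_def T01_def T0_def by force
  have d: "T1 \<inter> T01 = {}" "T1 \<inter> T0 = {}" "T01 \<inter> T0 = {}"
    using f(2) unfolding T1_def T01_def T0_def by auto
  have p1: "\<forall>t\<in>T1. q t \<ge> qfloor P c \<and> r t = 1" using h1 f(1) unfolding T1_def by auto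
  have p01: "\<forall>t\<in>T01. q t = qfloor P c \<and> 0 < r t \<and> r t < 1" using h01 f(1) unfolding T01_def by auto
  have p0: "\<forall>t\<in>T0. q t = 0 \<and> r t = 0" using h0 unfolding T0_def by auto
  show ?thesis unfolding floor_randomized_def prod.case
    using icir u0 i1 i01 i0 d un o1 o2 o3 p1 p01 p0 by blast
qed


theorem theorem1:
  fixes tlo thi c qbar \<alpha> :: real and P :: "real \<Rightarrow> real" and M :: mech
  assumes "0 < tlo" and "tlo < thi"
    and "c > 0"
    and "continuous_on {0..} P"
    and "\<forall>x y. 0 \<le> x \<longrightarrow> x < y \<longrightarrow> P y < P x"
    and "qbar > 0" and "P qbar = 0"
    and A2: "\<exists>q\<ge>0. P q = thi \<and> TS P c thi q > 0"
    and "0 \<le> \<alpha>" and "\<alpha> < 1"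
    and "IC_IR tlo thi qbar M"
    and "\<not> floor_randomized P c tlo thi qbar M"
  shows "\<exists>M'. floor_randomized P c tlo thi qbar M' \<and> dominates P c \<alpha> tlo thi qbar M' M"
proof -
  note cont = assms(4) and dec = assms(5)
  obtain r q u where M: "M = (r,q,u)" by (cases M) auto
  have icir: "IC_IR tlo thi qbar (r,q,u)" using assms(11) M by simp
  have mech: "\<forall>t\<in>{tlo..thi}. 0 \<le> r t \<and> r t \<le> 1 \<and> 0 \<le> q t \<and> q t \<le> qbar \<and> (q t = 0 \<longleftrightarrow> r t = 0)"
    using icir unfolding IC_IR_def is_mechanism_def by simp
  have ic: "\<forall>t\<in>{tlo..thi}. \<forall>t'\<in>{tlo..thi}. u t \<ge> u t' + (t' - t) * q t' * r t'"
    using icir unfolding IC_IR_def IC_def by simp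
  have ir: "\<forall>t\<in>{tlo..thi}. u t \<ge> 0" using icir unfolding IC_IR_def IR_def by simp
  have nfr: "\<not> floor_randomized P c tlo thi qbar (r,q,u)" using assms(12) M by simp
  define f where "f = qfloor P c"
  obtain q0 where q0: "q0 \<ge> 0" "P q0 = thi" "TS P c thi q0 > 0" using A2 by blast
  have q0ne: "q0 \<noteq> 0" using q0(3) unfolding TS_def by auto
  have hq0: "V P q0 - q0 * P q0 > c" using q0 q0ne unfolding TS_def by (simp add: mult.commute)
  have fp: "f > 0" "V P f - f * P f = c" "f < q0"
    using qfloor_props[OF cont dec assms(3) q0(1) hq0] unfolding f_def by auto
  have "q0 < qbar"
  proof (rule ccontr)
    assume "\<not> q0 < qbar"
    then consider "q0 = qbar" | "qbar < q0" by linarith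
    then show False
    proof cases
      case 1 then show False using q0(2) assms(7,1,2) by simp
    next
      case 2 then have "P q0 < P qbar" using dec assms(6) by auto
      then show False using q0(2) assms(7,1,2) by simp
    qed
  qed
  with fp have fq: "f < qbar" by simp
  define x where "x t = q t * r t" for t
  have xnn: "\<forall>t\<in>{tlo..thi}. 0 \<le> x t" using mech unfolding x_def by auto
  have xle: "\<forall>t\<in>{tlo..thi}. x t \<le> q t"
  proof
    fix t assume t: "t \<in> {tlo..thi}"
    have "q t * r t \<le> q t * 1" using mech t by (intro mult_left_mono) auto
    then show "x t \<le> q t" unfolding x_def by simp
  qed
  have xpos: "\<forall>t\<in>{tlo..thi}. 0 < x t \<longrightarrow> 0 < q t \<and> 0 < r t"
  proof (intro ballI impI)
    fix t assume t: "t \<in> {tlo..thi}" and "0 < x t"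
    then have "q t \<noteq> 0" "r t \<noteq> 0" unfolding x_def by auto
    then show "0 < q t \<and> 0 < r t" using mech t by force
  qed
  have x0: "\<forall>t\<in>{tlo..thi}. x t = 0 \<longrightarrow> q t = 0 \<and> r t = 0"
  proof (intro ballI impI)
    fix t assume t: "t \<in> {tlo..thi}" and "x t = 0"
    then have "q t = 0 \<or> r t = 0" unfolding x_def by auto
    then show "q t = 0 \<and> r t = 0" using mech t by blast
  qed
  have ic': "\<forall>t\<in>{tlo..thi}. \<forall>t'\<in>{tlo..thi}. u t \<ge> u t' + (t' - t) * x t'"
    using ic unfolding x_def by (simp add: mult.assoc)
  have mono: "\<forall>a\<in>{tlo..thi}. \<forall>b\<in>{tlo..thi}. a \<le> b \<longrightarrow> x b \<le> x a"
  proof (intro ballI impI)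
    fix a b assume a: "a \<in> {tlo..thi}" and b: "b \<in> {tlo..thi}" and ab: "a \<le> b"
    show "x b \<le> x a"
    proof (cases "a = b")
      case False
      then have ab': "a < b" using ab by simp
      have "u a \<ge> u b + (b - a) * x b" "u b \<ge> u a + (a - b) * x a" using ic' a b by auto
      then have "(b - a) * (x b - x a) \<le> 0" by (simp add: algebra_simps)
      then show ?thesis using ab' by (simp add: mult_le_0_iff)
    qed simp
  qed
  define q' where "q' t = (if f \<le> x t then x t else if 0 < x t then f else 0)" for t
  define r' where "r' t = (if f \<le> x t then 1 else if 0 < x t then x t / f else 0)" for t
  define u' where "u' t = u t - u thi" for t
  define M' where "M' = (r', q', u')"
  have thi_in: "thi \<in> {tlo..thi}" using assms(2) by simp
  have x'eq: "\<forall>t\<in>{tlo..thi}. q' t * r' t = x t"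
    using xnn fp(1) unfolding q'_def r'_def by auto
  have mech': "is_mechanism tlo thi qbar M'"
    unfolding is_mechanism_def M'_def prod.case
  proof
    fix t assume t: "t \<in> {tlo..thi}"
    have "x t \<le> qbar" using xle mech t by force
    then show "0 \<le> r' t \<and> r' t \<le> 1 \<and> 0 \<le> q' t \<and> q' t \<le> qbar \<and> (q' t = 0 \<longleftrightarrow> r' t = 0)"
      using xnn t fp(1) fq unfolding q'_def r'_def by (auto simp: divide_simps)
  qed
  have ic'': "IC tlo thi M'"
    unfolding IC_def M'_def prod.case
  proof (intro ballI)
    fix t t' assume t: "t \<in> {tlo..thi}" and t': "t' \<in> {tlo..thi}"
    have e: "(t' - t) * q' t' * r' t' = (t' - t) * x t'" using x'eq t' by (simp add: mult.assoc)
    have "u t' + (t' - t) * x t' \<le> u t" using ic' t t' by blast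
    then show "u' t' + (t' - t) * q' t' * r' t' \<le> u' t" unfolding u'_def e by simp
  qed
  have ir': "IR tlo thi M'" unfolding IR_def M'_def prod.case
  proof
    fix t assume t: "t \<in> {tlo..thi}"
    have "u t \<ge> u thi + (thi - t) * x thi" using ic' t thi_in by auto
    moreover have "(thi - t) * x thi \<ge> 0" using xnn thi_in t by auto
    ultimately show "0 \<le> u' t" unfolding u'_def by simp
  qed
  have icir': "IC_IR tlo thi qbar M'" unfolding IC_IR_def using mech' ic'' ir' by simp
  have cmp: "r t * TS P c t (q t) \<le> r' t * TS P c t (q' t) \<and>
      (r t * TS P c t (q t) = r' t * TS P c t (q' t) \<longrightarrow>
        (f \<le> x t \<longrightarrow> q t \<ge> f \<and> r t = 1) \<and>
        (0 < x t \<and> x t < f \<longrightarrow> q t = f \<and> 0 < r t \<and> r t < 1))"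
    if t: "t \<in> {tlo..thi}" for t
  proof (cases "x t = 0")
    case True
    then have "q t = 0" "r t = 0" using x0 t by auto
    then show ?thesis using True fp(1) unfolding q'_def r'_def by simp
  next
    case False
    then have X: "0 < x t" using xnn t by force
    have qr: "0 < q t" "0 < r t" using xpos X t by auto
    define Q where "Q = (if f \<le> x t then x t else f)"
    have Q: "q' t = Q" "0 < Q" using X fp(1) unfolding q'_def Q_def by auto
    have rQ: "Q * r' t = x t" using x'eq t Q(1) by force
    have L: "r' t * TS P c t (q' t) = x t * ((V P Q - c)/Q) - t * x t"
      using rTS[OF Q(2), of "r' t" P c t] Q rQ by simp
    have R: "r t * TS P c t (q t) = x t * ((V P (q t) - c)/q t) - t * x t"
      using rTS[OF qr(1), of "r t" P c t] unfolding x_def by simp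
    have G: "q t = Q \<or> (V P (q t) - c)/q t < (V P Q - c)/Q"
      by (rule Gcomp[OF cont dec fp(2) fp(1) X]) (use xle t Q_def in auto)
    have le: "r t * TS P c t (q t) \<le> r' t * TS P c t (q' t)"
    proof (cases "q t = Q")
      case True then show ?thesis using L R by simp
    next
      case False
      then have "(V P (q t) - c)/q t < (V P Q - c)/Q" using G by simp
      then have "x t * ((V P (q t) - c)/q t) < x t * ((V P Q - c)/Q)" using X by (rule mult_strict_left_mono)
      then show ?thesis using L R by simp
    qed
    moreover have "(f \<le> x t \<longrightarrow> q t \<ge> f \<and> r t = 1) \<and>
        (0 < x t \<and> x t < f \<longrightarrow> q t = f \<and> 0 < r t \<and> r t < 1)"
      if eq: "r t * TS P c t (q t) = r' t * TS P c t (q' t)"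
    proof -
      have qQ: "q t = Q"
      proof (rule ccontr)
        assume "q t \<noteq> Q"
        then have "(V P (q t) - c)/q t < (V P Q - c)/Q" using G by simp
        then have "x t * ((V P (q t) - c)/q t) < x t * ((V P Q - c)/Q)" using X by (rule mult_strict_left_mono)
        then show False using L R eq by simp
      qed
      show ?thesis
      proof (rule conjI; intro impI)
        assume "f \<le> x t"
        then have "q t = x t" using qQ unfolding Q_def by simp
        then have "q t * r t = q t * 1" unfolding x_def by simp
        then show "f \<le> q t \<and> r t = 1" using qr \<open>f \<le> x t\<close> \<open>q t = x t\<close> by simp
      next
        assume a: "0 < x t \<and> x t < f"
        then have qf: "q t = f" using qQ unfolding Q_def by simp
        have "r t < 1"
        proof (rule ccontr)
          assume "\<not> r t < 1" then have "r t = 1" using mech t by force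
          then show False using a qf unfolding x_def by simp
        qed
        then show "q t = f \<and> 0 < r t \<and> r t < 1" using qf qr by simp
      qed
    qed
    ultimately show ?thesis by blast
  qed
  have a1: "1 - \<alpha> > 0" using assms(10) by simp
  have uthi: "u thi \<ge> 0" using ir thi_in by auto
  have RSdiff: "RS P c \<alpha> t M' - RS P c \<alpha> t M =
      (r' t * TS P c t (q' t) - r t * TS P c t (q t)) + (1 - \<alpha>) * u thi" for t
    unfolding RS_def M'_def M u'_def by (simp add: algebra_simps)
  have ge: "\<forall>t\<in>{tlo..thi}. RS P c \<alpha> t M' \<ge> RS P c \<alpha> t M"
  proof
    fix t assume t: "t \<in> {tlo..thi}"
    have "(1 - \<alpha>) * u thi \<ge> 0" using a1 uthi by simp
    then show "RS P c \<alpha> t M' \<ge> RS P c \<alpha> t M" using RSdiff[of t] cmp[OF t] by linarith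
  qed
  have strict: "\<exists>t\<in>{tlo..thi}. RS P c \<alpha> t M' > RS P c \<alpha> t M"
  proof (rule ccontr)
    assume ns: "\<not> ?thesis"
    have eqs: "r t * TS P c t (q t) = r' t * TS P c t (q' t) \<and> (1 - \<alpha>) * u thi = 0"
      if t: "t \<in> {tlo..thi}" for t
    proof -
      have "\<not> RS P c \<alpha> t M' > RS P c \<alpha> t M" using ns t by blast
      then have "RS P c \<alpha> t M' \<le> RS P c \<alpha> t M" by linarith
      moreover have "(1 - \<alpha>) * u thi \<ge> 0" using a1 uthi by simp
      ultimately show ?thesis using RSdiff[of t] cmp[OF t] by linarith
    qed
    have u0: "u thi = 0" using eqs[OF thi_in] a1 by simp
    have "floor_randomized P c tlo thi qbar (r,q,u)"
    proof (rule fr_intro[OF icir u0 f_def fp(1) mono xnn])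
      show "\<forall>t\<in>{tlo..thi}. f \<le> x t \<longrightarrow> f \<le> q t \<and> r t = 1" using cmp eqs by blast
      show "\<forall>t\<in>{tlo..thi}. 0 < x t \<and> x t < f \<longrightarrow> q t = f \<and> 0 < r t \<and> r t < 1" using cmp eqs by blast
      show "\<forall>t\<in>{tlo..thi}. x t = 0 \<longrightarrow> q t = 0 \<and> r t = 0" using x0 by blast
    qed
    with nfr show False by simp
  qed
  have frM': "floor_randomized P c tlo thi qbar M'"
    unfolding M'_def
  proof (rule fr_intro[OF icir'[unfolded M'_def] _ f_def fp(1) mono xnn])
    show "u' thi = 0" unfolding u'_def by simp
    show "\<forall>t\<in>{tlo..thi}. f \<le> x t \<longrightarrow> f \<le> q' t \<and> r' t = 1" unfolding q'_def r'_def by auto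
    show "\<forall>t\<in>{tlo..thi}. 0 < x t \<and> x t < f \<longrightarrow> q' t = f \<and> 0 < r' t \<and> r' t < 1"
      using fp(1) unfolding q'_def r'_def by auto
    show "\<forall>t\<in>{tlo..thi}. x t = 0 \<longrightarrow> q' t = 0 \<and> r' t = 0" using fp(1) unfolding q'_def r'_def by auto
  qed
  have "dominates P c \<alpha> tlo thi qbar M' M"
    unfolding dominates_def using icir' assms(11) ge strict by blast
  with frM' show ?thesis by blast
qed

end
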